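(* Let $T\ge 1$ be an integer and for integers $l\ge1$, $0\le n\le l-1$ with $l-n\le T$ put $P^l_D(n)=\frac{\prod_{i=0}^{l-n-1}(1-\frac{i}{T})}{T^{n}}$. If $l \le \lfloor T-\sqrt{T}\rfloor +1$, $n\ge 0$ and $n+1 \le l-2$, then $P^{l-1}_D(n+1) \le P^l_D(n)$. *)

theory Defs
  imports Complex_Main
begin

definition PD :: "nat \<Rightarrow> nat \<Rightarrow> nat \<Rightarrow> real" where
  "PD T l n = (\<Prod>i\<in>{0..<l-n}. (1 - real i / real T)) / real T ^ n"

end

theory Submission
  imports Defs
begin

theorem mainTheorem3:
  fixes T l n :: nat
  assumes "T \<ge> 1"
    and "l \<ge> 1"
    and "int l \<le> \<lfloor>real T - sqrt (real T)\<rfloor> + 1"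
    and "n + 1 \<le> l - 2"
  shows "PD T (l - 1) (n + 1) \<le> PD T l n"
proof -
  define j where "j = l - n - 2"
  have j1: "l - n = Suc (Suc j)" and j2: "l - 1 - (n + 1) = j" using assms(4) unfolding j_def by auto
  define f where "f = (\<lambda>i::nat. 1 - real i / real T)"
  define A where "A = (\<Prod>i\<in>{0..<j}. f i)"
  have Tp: "real T > 0" using assms(1) by simp
  define s where "s = sqrt (real T)"
  have s2: "s * s = real T" unfolding s_def using Tp by simp
  have s1: "s \<ge> 1" unfolding s_def using assms(1) by simp
  have lb: "real l \<le> real T - s + 1"
  proof -
    have "real_of_int (int l) \<le> real_of_int (\<lfloor>real T - sqrt (real T)\<rfloor> + 1)"
      using assms(3) by linarith
    also have "\<dots> \<le> real T - s + 1" unfolding s_def by linarith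
    finally show ?thesis by simp
  qed
  have jl: "real j + 2 \<le> real l" using j1 by linarith
  have jT: "real j + 1 + s \<le> real T" using lb jl by linarith
  have A0: "A \<ge> 0" unfolding A_def f_def
  proof (rule prod_nonneg)
    fix i assume "i \<in> {0..<j}"
    then have "real i \<le> real T" using jT s1 by simp
    then show "0 \<le> 1 - real i / real T" using Tp by (simp add: field_simps)
  qed
  have key0: "real T \<le> (real T - real j) * (real T - real j - 1)"
  proof -
    have a: "real T - real j - 1 \<ge> s" using jT by linarith
    have "real T \<le> (s + 1) * s" using s2 s1 by (simp add: algebra_simps)
    also have "\<dots> \<le> (real T - real j) * (real T - real j - 1)"
      using a s1 by (intro mult_mono) auto
    finally show ?thesis .
  qed
  have key: "1 / real T \<le> f j * f (Suc j)"
  proof -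
    have "f j * f (Suc j) = (real T - real j) * (real T - real j - 1) / (real T * real T)"
      unfolding f_def using Tp by (simp add: field_simps)
    also have "\<dots> \<ge> real T / (real T * real T)"
      using key0 Tp by (intro divide_right_mono) auto
    finally show ?thesis using Tp by simp
  qed
  have L: "PD T (l - 1) (n + 1) = A / real T ^ n * (1 / real T)"
    unfolding PD_def j2 A_def f_def by simp
  have R: "PD T l n = A / real T ^ n * (f j * f (Suc j))"
    unfolding PD_def j1 A_def f_def by (simp add: prod.atLeast0_lessThan_Suc)
  show ?thesis unfolding L R using key A0 Tp by (intro mult_left_mono) auto
qed

end
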